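(* Let $n\ge 3$. The set $\mathbf{W}^{\le 5}_{\mathrm{bf}}(n)$ is the unique maximal transition semigroup of a minimal DFA $\mathcal{D}_n$ of a bifix-free language (with the state conventions below) in which all pairs of states from $Q_M$ are colliding.
   Context: A language is bifix-free if no word of it is a proper prefix or a proper suffix of another word of it. For a minimal complete DFA $\mathcal{D}_n$ of a bifix-free language with $n$ states the states are named $Q=\{0,\dots,n-1\}$ so that $0$ is initial, $n-1$ is the empty state and $n-2$ is the unique final state (quotient $\{\varepsilon\}$). Transformations act on the right, $q(st)=(qs)t$; the transition semigroup $T(n)$ is the semigroup of transformations of $Q$ induced by nonempty words. Let $Q_M=\{1,\dots,n-3\}$. An unordered pair $\{p,q\}$ of distinct states of $Q_M$ is colliding (in $T(n)$) if there is $t\in T(n)$ with $0t=p$ and $rt=q$ for some $r\in Q_M$. Let $\mathbf{B}_{\mathrm{bf}}(n)$ be the set of all transformations $t$ of $Q$ with $0\notin Qt$, $(n-1)t=n-1$, $(n-2)t=n-1$, and for all $j\ge1$, either $0t^j=n-1$ or $0t^j\ne qt^j$ for all $0<q<n-1$. Then $\mathbf{W}^{\le 5}_{\mathrm{bf}}(n)=\{t\in\mathbf{B}_{\mathrm{bf}}(n)\mid$ for all distinct $p,q\in Q_M$, $pt=qt=n-1$ or $pt\ne qt\}$. *)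

theory Defs
  imports Main
begin

text \<open>A DFA with states Q = {0..<n}, alphabet Al, transition function delta
  (letter a maps state q to delta a q), initial state 0 and unique final state n-2.
  Words act on the right: fold applies the first letter first.\<close>

definition word_act :: "('a \<Rightarrow> nat \<Rightarrow> nat) \<Rightarrow> 'a list \<Rightarrow> nat \<Rightarrow> nat" where
  "word_act delta w q = fold delta w q"

definition induced :: "nat \<Rightarrow> ('a \<Rightarrow> nat \<Rightarrow> nat) \<Rightarrow> 'a list \<Rightarrow> (nat \<Rightarrow> nat)" where
  "induced n delta w = (\<lambda>q. if q < n then word_act delta w q else q)"

definition trans_sgrp :: "nat \<Rightarrow> 'a set \<Rightarrow> ('a \<Rightarrow> nat \<Rightarrow> nat) \<Rightarrow> (nat \<Rightarrow> nat) set" where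
  "trans_sgrp n Al delta = {induced n delta w | w. w \<in> lists Al \<and> w \<noteq> []}"

definition dfa_lang :: "nat \<Rightarrow> 'a set \<Rightarrow> ('a \<Rightarrow> nat \<Rightarrow> nat) \<Rightarrow> 'a list set" where
  "dfa_lang n Al delta = {w \<in> lists Al. word_act delta w 0 = n - 2}"

definition bifix_free :: "'a list set \<Rightarrow> bool" where
  "bifix_free L \<longleftrightarrow> (\<forall>u\<in>L. \<forall>v\<in>L. \<forall>x. x \<noteq> [] \<longrightarrow> v \<noteq> u @ x \<and> v \<noteq> x @ u)"

text \<open>Minimal complete DFA of a bifix-free language with the state conventions:
  0 initial, n-1 empty state, n-2 the unique final state with quotient {epsilon}.\<close>
definition bf_min_dfa :: "nat \<Rightarrow> 'a set \<Rightarrow> ('a \<Rightarrow> nat \<Rightarrow> nat) \<Rightarrow> bool" where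
  "bf_min_dfa n Al delta \<longleftrightarrow>
     finite Al \<and>
     (\<forall>a\<in>Al. \<forall>q<n. delta a q < n) \<and>
     (\<forall>q<n. \<exists>w\<in>lists Al. word_act delta w 0 = q) \<and>
     (\<forall>p<n. \<forall>q<n. p \<noteq> q \<longrightarrow>
        (\<exists>w\<in>lists Al. (word_act delta w p = n - 2) \<noteq> (word_act delta w q = n - 2))) \<and>
     bifix_free (dfa_lang n Al delta) \<and>
     (\<forall>w\<in>lists Al. word_act delta w (n - 1) \<noteq> n - 2) \<and>
     (\<forall>w\<in>lists Al. word_act delta w (n - 2) = n - 2 \<longleftrightarrow> w = [])"

definition Q_M :: "nat \<Rightarrow> nat set" where
  "Q_M n = {1..n - 3}"

definition colliding :: "nat \<Rightarrow> (nat \<Rightarrow> nat) set \<Rightarrow> nat \<Rightarrow> nat \<Rightarrow> bool" where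
  "colliding n T p q \<longleftrightarrow>
     (\<exists>t\<in>T. (t 0 = p \<and> (\<exists>r\<in>Q_M n. t r = q)) \<or> (t 0 = q \<and> (\<exists>r\<in>Q_M n. t r = p)))"

definition all_colliding :: "nat \<Rightarrow> (nat \<Rightarrow> nat) set \<Rightarrow> bool" where
  "all_colliding n T \<longleftrightarrow> (\<forall>p\<in>Q_M n. \<forall>q\<in>Q_M n. p \<noteq> q \<longrightarrow> colliding n T p q)"

definition B_bf :: "nat \<Rightarrow> (nat \<Rightarrow> nat) set" where
  "B_bf n = {t. (\<forall>q. n \<le> q \<longrightarrow> t q = q) \<and> (\<forall>q<n. t q < n) \<and>
              (\<forall>q<n. t q \<noteq> 0) \<and> t (n - 1) = n - 1 \<and> t (n - 2) = n - 1 \<and>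
              (\<forall>j\<ge>1. (t ^^ j) 0 = n - 1 \<or>
                  (\<forall>q. 0 < q \<and> q < n - 1 \<longrightarrow> (t ^^ j) 0 \<noteq> (t ^^ j) q))}"

definition W_bf :: "nat \<Rightarrow> (nat \<Rightarrow> nat) set" where
  "W_bf n = {t \<in> B_bf n. \<forall>p\<in>Q_M n. \<forall>q\<in>Q_M n. p \<noteq> q \<longrightarrow>
              (t p = n - 1 \<and> t q = n - 1) \<or> t p \<noteq> t q}"

end

theory Submission
  imports Defs "HOL-Library.FuncSet"
begin

definition Sset :: "nat \<Rightarrow> (nat \<Rightarrow> nat) set" where
  "Sset n = {t. (\<forall>q. n \<le> q \<longrightarrow> t q = q) \<and> (\<forall>q<n. t q < n \<and> t q \<noteq> 0) \<and>
      t (n - 1) = n - 1 \<and> t (n - 2) = n - 1 \<and>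
      (\<forall>x y. x \<le> n - 3 \<longrightarrow> y \<le> n - 3 \<longrightarrow> x \<noteq> y \<longrightarrow> t x = t y \<longrightarrow> t x = n - 1)}"

lemma S_comp:
  assumes n: "n \<ge> 3" and f: "f \<in> Sset n" and g: "g \<in> Sset n"
  shows "(\<lambda>q. g (f q)) \<in> Sset n"
proof -
  have pair: "g (f x) = n - 1" if "x \<le> n - 3" "y \<le> n - 3" "x \<noteq> y" "g (f x) = g (f y)" for x y
  proof (cases "f x = f y")
    case True then have "f x = n - 1" using f that unfolding Sset_def by blast
    then show ?thesis using g unfolding Sset_def by simp
  next
    case False
    have fx: "f x < n" "f y < n" using f that n unfolding Sset_def by auto
    show ?thesis
    proof (cases "f x \<le> n - 3 \<and> f y \<le> n - 3")
      case True then show ?thesis using g that False unfolding Sset_def by blast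
    next
      case False
      then have "f x = n - 2 \<or> f x = n - 1 \<or> f y = n - 2 \<or> f y = n - 1" using fx n by auto
      then show ?thesis using g that unfolding Sset_def by auto
    qed
  qed
  show ?thesis using f g pair unfolding Sset_def mem_Collect_eq
    by (intro conjI; auto)
qed

lemma S_pow:
  assumes n: "n \<ge> 3" and t: "t \<in> Sset n"
  shows "t ^^ Suc j \<in> Sset n"
proof (induction j)
  case 0 then show ?case using t by simp
next
  case (Suc j)
  have "t ^^ Suc (Suc j) = (\<lambda>q. t ((t ^^ Suc j) q))" by (simp add: comp_def)
  then show ?case using S_comp[OF n Suc t] by simp
qed

lemma W_eq:
  assumes n: "n \<ge> 3"
  shows "W_bf n = Sset n"
proof
  show "W_bf n \<subseteq> Sset n"
  proof
    fix t assume tW: "t \<in> W_bf n"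
    then have B: "t \<in> B_bf n" and W: "\<forall>p\<in>Q_M n. \<forall>q\<in>Q_M n. p \<noteq> q \<longrightarrow>
              (t p = n - 1 \<and> t q = n - 1) \<or> t p \<noteq> t q" unfolding W_bf_def by auto
    have j1: "t 0 = n - 1 \<or> (\<forall>q. 0 < q \<and> q < n - 1 \<longrightarrow> t 0 \<noteq> t q)"
    proof -
      have "\<forall>j\<ge>1. (t ^^ j) 0 = n - 1 \<or>
                  (\<forall>q. 0 < q \<and> q < n - 1 \<longrightarrow> (t ^^ j) 0 \<noteq> (t ^^ j) q)"
        using B unfolding B_bf_def by blast
      from spec[OF this, of 1] show ?thesis by simp
    qed
    have pair: "t x = n - 1" if "x \<le> n - 3" "y \<le> n - 3" "x \<noteq> y" "t x = t y" for x y
    proof -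
      consider "x = 0" | "y = 0" | "x \<noteq> 0 \<and> y \<noteq> 0" by blast
      then show ?thesis
      proof cases
        case 1
        then have "0 < y" "y < n - 1" using that n by auto
        then show ?thesis using j1 that 1 by metis
      next
        case 2
        then have "0 < x" "x < n - 1" using that n by auto
        then show ?thesis using j1 that 2 by metis
      next
        case 3 then have "x \<in> Q_M n" "y \<in> Q_M n" using that unfolding Q_M_def by auto
        then show ?thesis using W that by blast
      qed
    qed
    show "t \<in> Sset n" using B pair unfolding B_bf_def Sset_def by auto
  qed
next
  show "Sset n \<subseteq> W_bf n"
  proof
    fix t assume t: "t \<in> Sset n"
    have pw: "(t ^^ j) 0 = n - 1 \<or> (\<forall>q. 0 < q \<and> q < n - 1 \<longrightarrow> (t ^^ j) 0 \<noteq> (t ^^ j) q)"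
      if j1: "j \<ge> 1" for j
    proof -
      obtain k where k: "j = Suc k" using j1 by (cases j) (auto)
      have s: "t ^^ j \<in> Sset n" using S_pow[OF n t] k by simp
      show ?thesis
      proof (cases "(t ^^ j) 0 = n - 1")
        case False
        have "(t ^^ j) 0 \<noteq> (t ^^ j) q" if "0 < q" "q < n - 1" for q
        proof (cases "q \<le> n - 3")
          case True then show ?thesis using s False that unfolding Sset_def by auto
        next
          case False2: False
          then have "q = n - 2" using that by auto
          then show ?thesis using s False unfolding Sset_def by auto
        qed
        then show ?thesis by blast
      qed simp
    qed
    have B: "t \<in> B_bf n" using t pw unfolding Sset_def B_bf_def by auto
    show "t \<in> W_bf n" using B t unfolding W_bf_def Sset_def Q_M_def by auto
  qed
qed

lemma wa_Cons: "word_act d (a # w) q = word_act d w (d a q)"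
  by (simp add: word_act_def)

lemma wa_Nil: "word_act d [] q = q"
  by (simp add: word_act_def)

lemma wa_append: "word_act d (u @ v) q = word_act d v (word_act d u q)"
  by (simp add: word_act_def)

lemma wa_ind: "q < n \<Longrightarrow> word_act d w q = induced n d w q"
  by (simp add: induced_def)

lemma ind_single:
  assumes "a \<in> Sset n" shows "induced n (\<lambda>t q. t q) [a] = a"
  using assms unfolding induced_def word_act_def Sset_def by (auto simp: fun_eq_iff)

lemma ind_cons:
  assumes a: "a \<in> Sset n"
  shows "induced n (\<lambda>t q. t q) (a # w) = (\<lambda>q. induced n (\<lambda>t q. t q) w (a q))"
proof
  fix q
  show "induced n (\<lambda>t q. t q) (a # w) q = induced n (\<lambda>t q. t q) w (a q)"
  proof (cases "q < n")
    case True then have "a q < n" using a unfolding Sset_def by auto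
    then show ?thesis using True unfolding induced_def word_act_def by simp
  next
    case False then have "a q = q" using a unfolding Sset_def by auto
    then show ?thesis using False unfolding induced_def by simp
  qed
qed

lemma ind_S:
  assumes n: "n \<ge> 3"
  shows "w \<in> lists (Sset n) \<Longrightarrow> w \<noteq> [] \<Longrightarrow> induced n (\<lambda>t q. t q) w \<in> Sset n"
proof (induction w)
  case Nil then show ?case by simp
next
  case (Cons a w)
  then have a: "a \<in> Sset n" by simp
  show ?case
  proof (cases "w = []")
    case True then show ?thesis using ind_single[OF a] a by simp
  next
    case False
    then have "induced n (\<lambda>t q. t q) w \<in> Sset n" using Cons by simp
    then show ?thesis using ind_cons[OF a] S_comp[OF n a] by simp
  qed
qed

lemma wa_last:
  "w \<in> lists (Sset n) \<Longrightarrow> word_act (\<lambda>t q. t q) w (n - 1) = n - 1"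
  by (induction w) (auto simp: wa_Cons wa_Nil Sset_def)

lemma letter_reach:
  assumes n: "n \<ge> 3" and q: "q < n" "q \<noteq> 0"
  shows "(\<lambda>x. if x = 0 then q else if x < n then n - 1 else x) \<in> Sset n"
  using n q unfolding Sset_def by auto

lemma letter_dist:
  assumes n: "n \<ge> 3" and p: "p < n" "p \<noteq> n - 1" "p \<noteq> n - 2"
  shows "(\<lambda>x. if x = p then n - 2 else if x < n then n - 1 else x) \<in> Sset n"
  using n p unfolding Sset_def by auto

lemma letter_coll:
  assumes n: "n \<ge> 3" and p: "p \<in> Q_M n" and q: "q \<in> Q_M n" and pq: "p \<noteq> q"
  shows "(\<lambda>x. if x = 0 then p else if x = q then q else if x < n then n - 1 else x) \<in> Sset n"
  using n p q pq unfolding Sset_def Q_M_def by auto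

lemma S_finite: "finite (Sset n)"
proof -
  have "Sset n \<subseteq> (\<lambda>f q. if q < n then f q else q) ` (PiE {..<n} (\<lambda>_. {..<n}))"
  proof
    fix t assume t: "t \<in> Sset n"
    have "t = (\<lambda>q. if q < n then restrict t {..<n} q else q)"
      using t unfolding Sset_def by (auto simp: fun_eq_iff restrict_def)
    moreover have "restrict t {..<n} \<in> PiE {..<n} (\<lambda>_. {..<n})"
      using t unfolding Sset_def by auto
    ultimately show "t \<in> (\<lambda>f q. if q < n then f q else q) ` (PiE {..<n} (\<lambda>_. {..<n}))"
      by blast
  qed
  moreover have "finite (PiE {..<n} (\<lambda>_. {..<n}))" by (simp add: finite_PiE)
  ultimately show ?thesis using finite_subset by blast
qed

lemma part1:
  assumes n: "n \<ge> 3"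
  shows "bf_min_dfa n (Sset n) (\<lambda>t q. t q) \<and> all_colliding n (trans_sgrp n (Sset n) (\<lambda>t q. t q)) \<and>
            trans_sgrp n (Sset n) (\<lambda>t q. t q) = W_bf n"
proof -
  let ?d = "(\<lambda>t q. t q) :: (nat \<Rightarrow> nat) \<Rightarrow> nat \<Rightarrow> nat"
  have nz: "w \<in> lists (Sset n) \<Longrightarrow> w \<noteq> [] \<Longrightarrow> q < n \<Longrightarrow> word_act ?d w q = induced n ?d w q" for w q
    by (simp add: wa_ind)
  have T: "trans_sgrp n (Sset n) ?d = W_bf n"
  proof
    show "trans_sgrp n (Sset n) ?d \<subseteq> W_bf n"
    proof
      fix t assume "t \<in> trans_sgrp n (Sset n) ?d"
      then obtain w where w: "t = induced n ?d w" "w \<in> lists (Sset n)" "w \<noteq> []"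
        unfolding trans_sgrp_def by blast
      then show "t \<in> W_bf n" using ind_S[OF n w(2,3)] W_eq[OF n] by simp
    qed
  next
    show "W_bf n \<subseteq> trans_sgrp n (Sset n) ?d"
    proof
      fix t assume "t \<in> W_bf n"
      then have t: "t \<in> Sset n" using W_eq[OF n] by simp
      then have "induced n ?d [t] = t" by (rule ind_single)
      moreover have "[t] \<in> lists (Sset n)" using t by simp
      ultimately show "t \<in> trans_sgrp n (Sset n) ?d" unfolding trans_sgrp_def
        by (intro CollectI exI[of _ "[t]"]) simp
    qed
  qed
  have col: "all_colliding n (trans_sgrp n (Sset n) ?d)"
    unfolding all_colliding_def colliding_def
  proof (intro ballI impI)
    fix p q assume p: "p \<in> Q_M n" and q: "q \<in> Q_M n" and pq: "p \<noteq> q"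
    let ?c = "\<lambda>x. if x = 0 then p else if x = q then q else if x < n then n - 1 else x"
    have c: "?c \<in> Sset n" by (rule letter_coll[OF n p q pq])
    then have cT: "?c \<in> trans_sgrp n (Sset n) ?d" using T W_eq[OF n] by simp
    have "?c 0 = p" by simp
    moreover have "?c q = q" using q unfolding Q_M_def by auto
    ultimately show "\<exists>t\<in>trans_sgrp n (Sset n) ?d. t 0 = p \<and> (\<exists>r\<in>Q_M n. t r = q) \<or>
                 t 0 = q \<and> (\<exists>r\<in>Q_M n. t r = p)"
      using cT q by (intro bexI[of _ ?c] disjI1 conjI bexI[of _ q]) auto
  qed
  have m2: "word_act ?d w (n - 2) = n - 1" if "w \<in> lists (Sset n)" "w \<noteq> []" for w
  proof -
    have "induced n ?d w \<in> Sset n" using ind_S[OF n] that by blast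
    moreover have "n - 2 < n" using n by simp
    ultimately show ?thesis using wa_ind[of "n-2" n ?d w] unfolding Sset_def by auto
  qed
  have reach: "\<forall>q<n. \<exists>w\<in>lists (Sset n). word_act ?d w 0 = q"
  proof (intro allI impI)
    fix q assume q: "q < n"
    show "\<exists>w\<in>lists (Sset n). word_act ?d w 0 = q"
    proof (cases "q = 0")
      case True then show ?thesis by (intro bexI[of _ "[]"]) (auto simp: wa_Nil)
    next
      case False
      have "(\<lambda>x. if x = 0 then q else if x < n then n - 1 else x) \<in> Sset n"
        using letter_reach[OF n q False] .
      then show ?thesis
        by (intro bexI[of _ "[\<lambda>x. if x = 0 then q else if x < n then n - 1 else x]"])
           (auto simp: wa_Cons wa_Nil)
    qed
  qed
  have dist1: "\<exists>w\<in>lists (Sset n). (word_act ?d w p = n - 2) \<noteq> (word_act ?d w q = n - 2)"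
    if "p < n" "q < n" "p \<noteq> q" "p \<noteq> n - 1" "p \<noteq> n - 2" for p q
  proof -
    let ?e = "\<lambda>x. if x = p then n - 2 else if x < n then n - 1 else x"
    have "?e \<in> Sset n" using letter_dist[OF n] that by blast
    moreover have "n - 1 \<noteq> n - 2" using n by simp
    ultimately show ?thesis using that
      by (intro bexI[of _ "[?e]"]) (auto simp: wa_Cons wa_Nil)
  qed
  have dist: "\<forall>p<n. \<forall>q<n. p \<noteq> q \<longrightarrow>
        (\<exists>w\<in>lists (Sset n). (word_act ?d w p = n - 2) \<noteq> (word_act ?d w q = n - 2))"
  proof (intro allI impI)
    fix p q assume pq: "p < n" "q < n" "p \<noteq> q"
    show "\<exists>w\<in>lists (Sset n). (word_act ?d w p = n - 2) \<noteq> (word_act ?d w q = n - 2)"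
    proof (cases "p = n - 2 \<or> q = n - 2")
      case True then show ?thesis using pq by (intro bexI[of _ "[]"]) (auto simp: wa_Nil)
    next
      case False
      show ?thesis
      proof (cases "p = n - 1")
        case True
        then have "q \<noteq> n - 1" using pq by simp
        then show ?thesis using dist1[of q p] pq False by metis
      next
        case False2: False
        then show ?thesis using dist1[of p q] pq False by metis
      qed
    qed
  qed
  have bf: "bifix_free (dfa_lang n (Sset n) ?d)"
    unfolding bifix_free_def dfa_lang_def
  proof (intro ballI allI impI conjI)
    fix u v x :: "(nat \<Rightarrow> nat) list"
    assume u: "u \<in> {w \<in> lists (Sset n). word_act ?d w 0 = n - 2}"
      and v: "v \<in> {w \<in> lists (Sset n). word_act ?d w 0 = n - 2}" and x: "x \<noteq> []"
    show "v \<noteq> u @ x"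
    proof
      assume e: "v = u @ x"
      then have xl: "x \<in> lists (Sset n)" using v by simp
      have "word_act ?d v 0 = word_act ?d x (n - 2)" using e u by (simp add: wa_append)
      also have "\<dots> = n - 1" using m2[OF xl x] .
      finally have "word_act ?d v 0 = n - 1" .
      moreover have "word_act ?d v 0 = n - 2" using v by simp
      moreover have "n - 1 \<noteq> n - 2" using n by arith
      ultimately show False by simp
    qed
    show "v \<noteq> x @ u"
    proof
      assume e: "v = x @ u"
      then have xl: "x \<in> lists (Sset n)" and ul: "u \<in> lists (Sset n)" using v by auto
      let ?s = "word_act ?d x 0"
      have sS: "induced n ?d x \<in> Sset n" using ind_S[OF n xl x] .
      have s: "?s < n" "?s \<noteq> 0" using sS wa_ind[of 0 n ?d x] n unfolding Sset_def by auto
      have un: "u \<noteq> []" using u n by (auto simp: wa_Nil)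
      have gS: "induced n ?d u \<in> Sset n" using ind_S[OF n ul un] .
      have g0: "induced n ?d u 0 = n - 2" using u wa_ind[of 0 n ?d u] n by auto
      have gs: "induced n ?d u ?s = n - 2" using v e s wa_ind[of ?s n ?d u] by (simp add: wa_append)
      show False
      proof (cases "?s \<le> n - 3")
        case True
        have pr: "\<forall>x y. x \<le> n - 3 \<longrightarrow> y \<le> n - 3 \<longrightarrow> x \<noteq> y \<longrightarrow>
            induced n ?d u x = induced n ?d u y \<longrightarrow> induced n ?d u x = n - 1"
          using gS unfolding Sset_def by blast
        have "induced n ?d u 0 = n - 1"
          using pr[rule_format, of 0 ?s] True s g0 gs by simp
        then show False using g0 n by simp
      next
        case False
        then have "?s = n - 2 \<or> ?s = n - 1" using s by auto
        then have "induced n ?d u ?s = n - 1" using gS unfolding Sset_def by auto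
        then show False using gs n by simp
      qed
    qed
  qed
  have bfm: "bf_min_dfa n (Sset n) ?d"
    unfolding bf_min_dfa_def
  proof (intro conjI)
    show "finite (Sset n)" by (rule S_finite)
    show "\<forall>a\<in>Sset n. \<forall>q<n. a q < n" unfolding Sset_def by auto
    show "\<forall>q<n. \<exists>w\<in>lists (Sset n). word_act ?d w 0 = q" by (rule reach)
    show "\<forall>p<n. \<forall>q<n. p \<noteq> q \<longrightarrow>
        (\<exists>w\<in>lists (Sset n). (word_act ?d w p = n - 2) \<noteq> (word_act ?d w q = n - 2))" by (rule dist)
    show "bifix_free (dfa_lang n (Sset n) ?d)" by (rule bf)
    show "\<forall>w\<in>lists (Sset n). word_act ?d w (n - 1) \<noteq> n - 2"
      using wa_last n by fastforce
    show "\<forall>w\<in>lists (Sset n). (word_act ?d w (n - 2) = n - 2) = (w = [])"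
      using m2 n by (fastforce simp: wa_Nil)
  qed
  show ?thesis using bfm col T by simp
qed

context
  fixes n :: nat and Al :: "'a set" and delta :: "'a \<Rightarrow> nat \<Rightarrow> nat"
  assumes bf: "bf_min_dfa n Al delta" and n3: "n \<ge> 3"
begin

lemma F0: "w \<in> lists Al \<Longrightarrow> q < n \<Longrightarrow> word_act delta w q < n"
proof (induction w arbitrary: q)
  case Nil then show ?case by (simp add: wa_Nil)
next
  case (Cons a w)
  have "delta a q < n" using bf Cons.prems unfolding bf_min_dfa_def by auto
  then show ?case using Cons by (simp add: wa_Cons)
qed

lemma F1a: "a \<in> Al \<Longrightarrow> delta a (n - 1) = n - 1"
proof (rule ccontr)
  assume a: "a \<in> Al" and ne: "delta a (n - 1) \<noteq> n - 1"
  let ?p = "delta a (n - 1)"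
  have lt: "n - 1 < n" using n3 by simp
  have p: "?p < n" using bf a lt unfolding bf_min_dfa_def by auto
  have dis: "\<forall>p<n. \<forall>q<n. p \<noteq> q \<longrightarrow>
        (\<exists>w\<in>lists Al. (word_act delta w p = n - 2) \<noteq> (word_act delta w q = n - 2))"
    and nacc: "\<forall>w\<in>lists Al. word_act delta w (n - 1) \<noteq> n - 2"
    using bf unfolding bf_min_dfa_def by blast+
  obtain w where w: "w \<in> lists Al" "(word_act delta w ?p = n - 2) \<noteq> (word_act delta w (n - 1) = n - 2)"
    using dis p lt ne by blast
  have "word_act delta w ?p = word_act delta (a # w) (n - 1)" by (simp add: wa_Cons)
  moreover have "a # w \<in> lists Al" using a w by simp
  ultimately show False using w nacc by metis
qed

lemma F1: "w \<in> lists Al \<Longrightarrow> word_act delta w (n - 1) = n - 1"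
proof (induction w)
  case Nil then show ?case by (simp add: wa_Nil)
next
  case (Cons a w)
  then have "delta a (n - 1) = n - 1" using F1a by simp
  then show ?case using Cons by (simp add: wa_Cons)
qed

lemma F2: "w \<in> lists Al \<Longrightarrow> w \<noteq> [] \<Longrightarrow> word_act delta w (n - 2) = n - 1"
proof -
  assume wl: "w \<in> lists Al" and wne: "w \<noteq> []"
  then obtain a w' where aw: "w = a # w'" by (cases w) auto
  have a: "a \<in> Al" and w': "w' \<in> lists Al" using wl aw by auto
  have lt: "n - 1 < n" "n - 2 < n" using n3 by auto
  let ?p = "delta a (n - 2)"
  have p: "?p < n" using bf a lt unfolding bf_min_dfa_def by auto
  have dis: "\<forall>p<n. \<forall>q<n. p \<noteq> q \<longrightarrow>
        (\<exists>w\<in>lists Al. (word_act delta w p = n - 2) \<noteq> (word_act delta w q = n - 2))"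
    and nacc: "\<forall>w\<in>lists Al. word_act delta w (n - 1) \<noteq> n - 2"
    and fin: "\<forall>w\<in>lists Al. word_act delta w (n - 2) = n - 2 \<longleftrightarrow> w = []"
    using bf unfolding bf_min_dfa_def by blast+
  have "?p = n - 1"
  proof (rule ccontr)
    assume ne: "?p \<noteq> n - 1"
    obtain v where v: "v \<in> lists Al" "(word_act delta v ?p = n - 2) \<noteq> (word_act delta v (n - 1) = n - 2)"
      using dis p lt ne by blast
    have "word_act delta v ?p = word_act delta (a # v) (n - 2)" by (simp add: wa_Cons)
    moreover have "a # v \<in> lists Al" using a v by simp
    ultimately show False using v nacc fin by (metis list.distinct(1))
  qed
  then show ?thesis using aw F1[OF w'] by (simp add: wa_Cons)
qed

lemma F3: "p < n \<Longrightarrow> p \<noteq> n - 1 \<Longrightarrow> \<exists>v\<in>lists Al. word_act delta v p = n - 2"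
proof -
  assume p: "p < n" "p \<noteq> n - 1"
  have lt: "n - 1 < n" using n3 by simp
  have dis: "\<forall>p<n. \<forall>q<n. p \<noteq> q \<longrightarrow>
        (\<exists>w\<in>lists Al. (word_act delta w p = n - 2) \<noteq> (word_act delta w q = n - 2))"
    and nacc: "\<forall>w\<in>lists Al. word_act delta w (n - 1) \<noteq> n - 2"
    using bf unfolding bf_min_dfa_def by blast+
  obtain v where v: "v \<in> lists Al" "(word_act delta v p = n - 2) \<noteq> (word_act delta v (n - 1) = n - 2)"
    using dis p lt by blast
  then show ?thesis using nacc by blast
qed

lemma reachA: "q < n \<Longrightarrow> \<exists>u\<in>lists Al. word_act delta u 0 = q"
  using bf unfolding bf_min_dfa_def by blast

lemma bfA: "u \<in> lists Al \<Longrightarrow> word_act delta u 0 = n - 2 \<Longrightarrow> x \<in> lists Al \<Longrightarrow> x \<noteq> []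
   \<Longrightarrow> word_act delta (x @ u) 0 = n - 2 \<Longrightarrow> False"
proof -
  assume a: "u \<in> lists Al" "word_act delta u 0 = n - 2" "x \<in> lists Al" "x \<noteq> []"
     "word_act delta (x @ u) 0 = n - 2"
  have "bifix_free (dfa_lang n Al delta)" using bf unfolding bf_min_dfa_def by blast
  moreover have "u \<in> dfa_lang n Al delta" "x @ u \<in> dfa_lang n Al delta"
    using a unfolding dfa_lang_def by auto
  ultimately show False using a(4) unfolding bifix_free_def by blast
qed

lemma F5:
  assumes w: "w \<in> lists Al" "w \<noteq> []" and q: "q < n" "q \<noteq> 0"
    and eq: "word_act delta w 0 = word_act delta w q"
  shows "word_act delta w 0 = n - 1"
proof (rule ccontr)
  assume ne: "word_act delta w 0 \<noteq> n - 1"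
  let ?p = "word_act delta w 0"
  have p: "?p < n" using F0[OF w(1)] n3 by simp
  obtain v where v: "v \<in> lists Al" "word_act delta v ?p = n - 2" using F3[OF p ne] by blast
  obtain u where u: "u \<in> lists Al" "word_act delta u 0 = q" using reachA[OF q(1)] by blast
  have une: "u \<noteq> []" using u q by (auto simp: wa_Nil)
  have 1: "word_act delta (w @ v) 0 = n - 2" using v by (simp add: wa_append)
  have 2: "word_act delta (u @ (w @ v)) 0 = n - 2" using v u eq by (simp add: wa_append)
  show False using bfA[of "w @ v" u] 1 2 w v u une by simp
qed

lemma F6:
  assumes w: "w \<in> lists Al" "w \<noteq> []" and q: "q < n"
  shows "word_act delta w q \<noteq> 0"
proof
  assume z: "word_act delta w q = 0"
  have "0 \<noteq> n - 1" using n3 by simp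
  then obtain v where v: "v \<in> lists Al" "word_act delta v 0 = n - 2" using F3[of 0] n3 by auto
  obtain u where u: "u \<in> lists Al" "word_act delta u 0 = q" using reachA[OF q] by blast
  have 2: "word_act delta ((u @ w) @ v) 0 = n - 2" using v u z by (simp add: wa_append)
  show False using bfA[of v "u @ w"] 2 w v u by simp
qed

lemma part2:
  assumes col: "all_colliding n (trans_sgrp n Al delta)" and t: "t \<in> trans_sgrp n Al delta"
  shows "t \<in> W_bf n"
proof -
  obtain w where w: "t = induced n delta w" "w \<in> lists Al" "w \<noteq> []"
    using t unfolding trans_sgrp_def by blast
  have tw: "t q = word_act delta w q" if "q < n" for q using w that by (simp add: wa_ind)
  have lt: "n - 1 < n" "n - 2 < n" "0 < n" using n3 by auto
  have pair: "t x = n - 1" if xy: "x \<le> n - 3" "y \<le> n - 3" "x \<noteq> y" "t x = t y" for x y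
  proof -
    have xn: "x < n" "y < n" using xy n3 by auto
    consider "x = 0" | "y = 0" | "x \<in> Q_M n \<and> y \<in> Q_M n" using xy unfolding Q_M_def by force
    then show ?thesis
    proof cases
      case 1 then show ?thesis using F5[OF w(2,3), of y] xy xn tw lt by auto
    next
      case 2 then show ?thesis using F5[OF w(2,3), of x] xy xn tw lt by auto
    next
      case 3
      then have "colliding n (trans_sgrp n Al delta) x y" using col xy unfolding all_colliding_def by blast
      then obtain t' r where t': "t' \<in> trans_sgrp n Al delta" "r \<in> Q_M n"
        "(t' 0 = x \<and> t' r = y) \<or> (t' 0 = y \<and> t' r = x)"
        unfolding colliding_def by blast
      obtain w' where w': "t' = induced n delta w'" "w' \<in> lists Al" "w' \<noteq> []"
        using t'(1) unfolding trans_sgrp_def by blast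
      have r: "r < n" "r \<noteq> 0" using t'(2) n3 unfolding Q_M_def by auto
      have ww: "w' @ w \<in> lists Al" "w' @ w \<noteq> []" using w w' by auto
      have x0: "word_act delta w' 0 = t' 0" using w'(1) lt by (simp add: wa_ind)
      have xr: "word_act delta w' r = t' r" using w'(1) r by (simp add: wa_ind)
      have t0n: "t' 0 < n" using x0 F0[OF w'(2), of 0] lt by simp
      have trn: "t' r < n" using xr F0[OF w'(2), of r] r by simp
      have e0: "word_act delta (w' @ w) 0 = t (t' 0)"
        using x0 tw[OF t0n] by (simp add: wa_append)
      have er: "word_act delta (w' @ w) r = t (t' r)"
        using xr tw[OF trn] by (simp add: wa_append)
      have "word_act delta (w' @ w) 0 = word_act delta (w' @ w) r" using e0 er t'(3) xy by auto
      then have "word_act delta (w' @ w) 0 = n - 1" using F5[OF ww r] by simp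
      then show ?thesis using e0 t'(3) xy by auto
    qed
  qed
  have "t \<in> Sset n" unfolding Sset_def mem_Collect_eq
  proof (intro conjI allI impI)
    show "t q = q" if "n \<le> q" for q using w that by (simp add: induced_def)
    show "t q < n" if "q < n" for q using tw that F0[OF w(2)] by simp
    show "t q \<noteq> 0" if "q < n" for q using tw that F6[OF w(2,3)] by simp
    show "t (n - 1) = n - 1" using tw lt F1[OF w(2)] by simp
    show "t (n - 2) = n - 1" using tw lt F2[OF w(2,3)] by simp
    show "t x = n - 1" if "x \<le> n - 3" "y \<le> n - 3" "x \<noteq> y" "t x = t y" for x y
      using pair that by blast
  qed
  then show ?thesis using W_eq[OF n3] by simp
qed

end

theorem mainTheorem9:
  fixes n :: nat
  assumes "n \<ge> 3"
  shows "(\<exists>(Al :: (nat \<Rightarrow> nat) set) (delta :: (nat \<Rightarrow> nat) \<Rightarrow> nat \<Rightarrow> nat).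
            bf_min_dfa n Al delta \<and> all_colliding n (trans_sgrp n Al delta) \<and>
            trans_sgrp n Al delta = W_bf n) \<and>
         (\<forall>(Al :: 'a set) (delta :: 'a \<Rightarrow> nat \<Rightarrow> nat).
            bf_min_dfa n Al delta \<and> all_colliding n (trans_sgrp n Al delta) \<longrightarrow>
            trans_sgrp n Al delta \<subseteq> W_bf n)"
proof
  show "\<exists>(Al :: (nat \<Rightarrow> nat) set) (delta :: (nat \<Rightarrow> nat) \<Rightarrow> nat \<Rightarrow> nat).
            bf_min_dfa n Al delta \<and> all_colliding n (trans_sgrp n Al delta) \<and>
            trans_sgrp n Al delta = W_bf n"
    using part1[OF assms] by blast
  show "\<forall>(Al :: 'a set) (delta :: 'a \<Rightarrow> nat \<Rightarrow> nat).
            bf_min_dfa n Al delta \<and> all_colliding n (trans_sgrp n Al delta) \<longrightarrow>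
            trans_sgrp n Al delta \<subseteq> W_bf n"
    using part2[OF _ assms] by blast
qed

end
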